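(* Let $M$ be a pointed metric space which is uniformly discrete and unbounded, and let $X$ be a non-zero Banach space. Then the norm of $\mathcal F(M)\widehat{\otimes}_\pi X$ is octahedral.
   Context: All Banach spaces are real. $\mathcal F(M)$ is the Lipschitz-free space over $M$ (closed linear span of evaluation functionals $\delta_p$ in the dual of the space $\mathrm{Lip}_0(M)$ of real Lipschitz functions vanishing at the base point), $\widehat{\otimes}_\pi$ is the projective tensor product. $M$ is uniformly discrete if $\inf\{d(x,y):x\neq y\}>0$. A Banach space $Z$ is octahedral if for every $x_1,\dots,x_n\in S_Z$ and $\varepsilon>0$ there is $y\in S_Z$ with $\|x_i-y\|\ge 2-\varepsilon$ for all $i$. *)

theory Defs
  imports "HOL-Analysis.Analysis" "HOL-Library.Function_Algebras"
begin

definition uniformly_discrete :: "'m::metric_space set \<Rightarrow> bool" where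
  "uniformly_discrete M \<longleftrightarrow> (\<exists>e>0. \<forall>x\<in>M. \<forall>y\<in>M. x \<noteq> y \<longrightarrow> e \<le> dist x y)"

text \<open>Unit ball of Lip_0(M): real 1-Lipschitz functions vanishing at the base point.\<close>
definition lip1_0 :: "'m::metric_space \<Rightarrow> ('m \<Rightarrow> real) \<Rightarrow> bool" where
  "lip1_0 z f \<longleftrightarrow> f z = 0 \<and> (\<forall>x y. \<bar>f x - f y\<bar> \<le> dist x y)"

definition fin_supp :: "('m \<Rightarrow> 'a::zero) \<Rightarrow> bool" where
  "fin_supp a \<longleftrightarrow> finite {p. a p \<noteq> 0}"

text \<open>A finitely supported a represents the element sum_p a p * delta_p of span{delta_p}
  inside Lip_0(M)^*; its norm is the dual norm.\<close>
definition free_norm :: "'m::metric_space \<Rightarrow> ('m \<Rightarrow> real) \<Rightarrow> real" where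
  "free_norm z a = (SUP f \<in> Collect (lip1_0 z). \<bar>\<Sum>p\<in>{p. a p \<noteq> 0}. a p * f p\<bar>)"

text \<open>The algebraic tensor product span{delta_p} (x) X: the element sum_p delta_p (x) u p
  is encoded by a finitely supported u : M => X with u z = 0 (as delta_z = 0).\<close>
definition tensor_space :: "'m \<Rightarrow> ('m \<Rightarrow> 'x::real_normed_vector) set" where
  "tensor_space z = {u. fin_supp u \<and> u z = 0}"

text \<open>Projective norm: infimum of sum_i ||m_i||_F ||x_i|| over all representations
  u = sum_i m_i (x) x_i with m_i in span{delta_p}.\<close>
definition represents :: "'m \<Rightarrow> ('m \<Rightarrow> 'x::real_normed_vector) \<Rightarrow> (('m \<Rightarrow> real) \<times> 'x) list \<Rightarrow> bool" where
  "represents z u rs \<longleftrightarrow> (\<forall>(a, x)\<in>set rs. fin_supp a) \<and>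
      (\<forall>p. p \<noteq> z \<longrightarrow> u p = (\<Sum>(a, x)\<leftarrow>rs. a p *\<^sub>R x))"

definition proj_norm :: "'m::metric_space \<Rightarrow> ('m \<Rightarrow> 'x::real_normed_vector) \<Rightarrow> real" where
  "proj_norm z u = (INF rs \<in> Collect (represents z u). (\<Sum>(a, x)\<leftarrow>rs. free_norm z a * norm x))"

definition octahedral :: "'v::ab_group_add set \<Rightarrow> ('v \<Rightarrow> real) \<Rightarrow> bool" where
  "octahedral V N \<longleftrightarrow> (\<forall>F e. finite F \<and> F \<subseteq> {x\<in>V. N x = 1} \<and> e > 0 \<longrightarrow>
      (\<exists>y\<in>V. N y = 1 \<and> (\<forall>x\<in>F. N (x - y) \<ge> 2 - e)))"

end

theory Submission
  imports Defs
begin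

lemma lip_bound: "lip1_0 z f \<Longrightarrow> \<bar>f p\<bar> \<le> dist p z"
  unfolding lip1_0_def by (metis diff_zero)

lemma lip1_0_zero: "lip1_0 z (\<lambda>_. 0)"
  unfolding lip1_0_def by simp

lemma free_bdd:
  assumes "fin_supp a"
  shows "bdd_above ((\<lambda>f. \<bar>\<Sum>p\<in>{p. a p \<noteq> 0}. a p * f p\<bar>) ` Collect (lip1_0 z))"
proof (rule bdd_aboveI2)
  fix f assume "f \<in> Collect (lip1_0 z)"
  hence f: "lip1_0 z f" by simp
  have "\<bar>\<Sum>p\<in>{p. a p \<noteq> 0}. a p * f p\<bar> \<le> (\<Sum>p\<in>{p. a p \<noteq> 0}. \<bar>a p * f p\<bar>)"
    by (rule sum_abs)
  also have "\<dots> \<le> (\<Sum>p\<in>{p. a p \<noteq> 0}. \<bar>a p\<bar> * dist p z)"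
    by (rule sum_mono) (simp add: abs_mult lip_bound[OF f] mult_left_mono)
  finally show "\<bar>\<Sum>p\<in>{p. a p \<noteq> 0}. a p * f p\<bar> \<le> (\<Sum>p\<in>{p. a p \<noteq> 0}. \<bar>a p\<bar> * dist p z)" .
qed

lemma free_norm_nonneg:
  assumes "fin_supp a" shows "0 \<le> free_norm z a"
proof -
  have "\<bar>\<Sum>p\<in>{p. a p \<noteq> 0}. a p * (\<lambda>_. 0) p\<bar> \<le> free_norm z a"
    unfolding free_norm_def
    by (rule cSUP_upper[OF _ free_bdd[OF assms]]) (simp add: lip1_0_zero)
  thus ?thesis by simp
qed

lemma free_ge:
  assumes "fin_supp a" "L > 0" "g z = 0" "\<And>p p'. \<bar>g p - g p'\<bar> \<le> L * dist p p'"
  shows "\<bar>\<Sum>p\<in>{p. a p \<noteq> 0}. a p * g p\<bar> \<le> L * free_norm z a"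
proof -
  have l: "lip1_0 z (\<lambda>p. g p / L)"
    unfolding lip1_0_def using assms(2,3,4)
    by (auto simp: diff_divide_distrib[symmetric] pos_divide_le_eq mult.commute)
  have "\<bar>\<Sum>p\<in>{p. a p \<noteq> 0}. a p * (\<lambda>p. g p / L) p\<bar> \<le> free_norm z a"
    unfolding free_norm_def
    by (rule cSUP_upper[OF _ free_bdd[OF assms(1)]]) (simp add: l)
  moreover have "(\<Sum>p\<in>{p. a p \<noteq> 0}. a p * (\<lambda>p. g p / L) p) = (\<Sum>p\<in>{p. a p \<noteq> 0}. a p * g p) / L"
    by (simp add: sum_divide_distrib)
  ultimately show ?thesis using assms(2)
    by (simp add: pos_divide_le_eq mult.commute)
qed

lemma free_delta: "free_norm z (\<lambda>p. if p = q then 1 else 0) \<le> dist q z"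
proof -
  have e: "{p. (if p = q then 1 else 0::real) \<noteq> 0} = {q}" by auto
  show ?thesis unfolding free_norm_def e
    by (rule cSUP_least) (auto intro: lip1_0_zero lip_bound)
qed

lemma proj_upper:
  assumes "represents z w rs"
  shows "proj_norm z w \<le> (\<Sum>(a, x)\<leftarrow>rs. free_norm z a * norm x)"
  unfolding proj_norm_def
proof (rule cINF_lower)
  show "bdd_below ((\<lambda>rs. \<Sum>(a, x)\<leftarrow>rs. free_norm z a * norm x) ` Collect (represents z w))"
  proof (rule bdd_belowI2)
    fix rs assume "rs \<in> Collect (represents z w)"
    hence "\<forall>(a, x)\<in>set rs. fin_supp a" by (simp add: represents_def)
    thus "0 \<le> (\<Sum>(a, x)\<leftarrow>rs. free_norm z a * norm x)"
      by (intro sum_list_nonneg) (auto intro!: mult_nonneg_nonneg free_norm_nonneg)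
  qed
qed (use assms in simp)

lemma proj_lower:
  assumes "\<exists>rs. represents z w rs"
    and "\<And>rs. represents z w rs \<Longrightarrow> c \<le> (\<Sum>(a, x)\<leftarrow>rs. free_norm z a * norm x)"
  shows "c \<le> proj_norm z w"
  unfolding proj_norm_def using assms by (intro cINF_greatest) auto

lemma rep_exists:
  assumes "fin_supp w"
  shows "\<exists>rs. represents z w rs"
proof -
  obtain ps where ps: "set ps = {p. w p \<noteq> 0}" "distinct ps"
    using finite_distinct_list assms unfolding fin_supp_def by blast
  define rs where "rs = map (\<lambda>p. ((\<lambda>x. if x = p then 1 else 0::real), w p)) ps"
  have "represents z w rs"
    unfolding represents_def
  proof safe
    fix a x assume "(a, x) \<in> set rs"
    thus "fin_supp a" by (auto simp: rs_def fin_supp_def)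
  next
    fix p assume "p \<noteq> z"
    have "(\<Sum>(a, x)\<leftarrow>rs. a p *\<^sub>R x) = (\<Sum>q\<leftarrow>ps. (if p = q then 1 else 0::real) *\<^sub>R w q)"
      by (simp add: rs_def o_def)
    also have "\<dots> = (\<Sum>q\<in>{p. w p \<noteq> 0}. (if p = q then 1 else 0::real) *\<^sub>R w q)"
      using ps by (simp add: sum_list_distinct_conv_sum_set)
    also have "\<dots> = (\<Sum>q\<in>{p. w p \<noteq> 0}. if p = q then w q else 0)"
      by (rule sum.cong) auto
    also have "\<dots> = w p"
      using assms by (simp add: fin_supp_def sum.delta)
    finally show "w p = (\<Sum>(a, x)\<leftarrow>rs. a p *\<^sub>R x)" by simp
  qed
  thus ?thesis by blast
qed

lemma interchange:
  fixes g :: "'m \<Rightarrow> real" and rs :: "(('m \<Rightarrow> real) \<times> 'x::real_vector) list"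
  shows "(\<Sum>p\<in>U. g p *\<^sub>R (\<Sum>(a, x)\<leftarrow>rs. a p *\<^sub>R x)) = (\<Sum>(a, x)\<leftarrow>rs. (\<Sum>p\<in>U. a p * g p) *\<^sub>R x)"
proof (induction rs)
  case Nil
  then show ?case by simp
next
  case (Cons r rs)
  obtain a x where r: "r = (a, x)" by force
  have "(\<Sum>p\<in>U. g p *\<^sub>R (\<Sum>(a, x)\<leftarrow>r # rs. a p *\<^sub>R x))
      = (\<Sum>p\<in>U. (a p * g p) *\<^sub>R x) + (\<Sum>p\<in>U. g p *\<^sub>R (\<Sum>(a, x)\<leftarrow>rs. a p *\<^sub>R x))"
    by (simp add: r scaleR_right_distrib sum.distrib mult.commute)
  also have "\<dots> = (\<Sum>p\<in>U. a p * g p) *\<^sub>R x + (\<Sum>(a, x)\<leftarrow>rs. (\<Sum>p\<in>U. a p * g p) *\<^sub>R x)"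
    by (simp add: Cons.IH scaleR_sum_left)
  finally show ?case by (simp add: r)
qed


lemma pairing:
  assumes rep: "represents z w rs" and fw: "fin_supp w" and gz: "g z = 0"
  shows "(\<Sum>p\<in>{p. w p \<noteq> 0}. g p *\<^sub>R w p) = (\<Sum>(a, x)\<leftarrow>rs. (\<Sum>p\<in>{p. a p \<noteq> 0}. a p * g p) *\<^sub>R x)"
proof -
  define U where "U = {p. w p \<noteq> 0} \<union> (\<Union>(a, x)\<in>set rs. {p. a p \<noteq> 0})"
  have fa: "\<And>a x. (a, x) \<in> set rs \<Longrightarrow> fin_supp a" using rep by (auto simp: represents_def)
  have finU: "finite U" unfolding U_def using fw fa by (auto simp: fin_supp_def)
  have "(\<Sum>p\<in>{p. w p \<noteq> 0}. g p *\<^sub>R w p) = (\<Sum>p\<in>U. g p *\<^sub>R w p)"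
    by (rule sum.mono_neutral_left) (use finU in \<open>auto simp: U_def\<close>)
  also have "\<dots> = (\<Sum>p\<in>U. g p *\<^sub>R (\<Sum>(a, x)\<leftarrow>rs. a p *\<^sub>R x))"
  proof (rule sum.cong)
    fix p assume "p \<in> U"
    show "g p *\<^sub>R w p = g p *\<^sub>R (\<Sum>(a, x)\<leftarrow>rs. a p *\<^sub>R x)"
    proof (cases "p = z")
      case True thus ?thesis using gz by simp
    next
      case False thus ?thesis using rep by (simp add: represents_def)
    qed
  qed simp
  also have "\<dots> = (\<Sum>(a, x)\<leftarrow>rs. (\<Sum>p\<in>U. a p * g p) *\<^sub>R x)"
    by (rule interchange)
  also have "\<dots> = (\<Sum>(a, x)\<leftarrow>rs. (\<Sum>p\<in>{p. a p \<noteq> 0}. a p * g p) *\<^sub>R x)"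
  proof (rule arg_cong[where f = sum_list], rule map_cong)
    fix r assume r: "r \<in> set rs"
    obtain a x where rr: "r = (a, x)" by force
    have "(\<Sum>p\<in>U. a p * g p) = (\<Sum>p\<in>{p. a p \<noteq> 0}. a p * g p)"
      by (rule sum.mono_neutral_right) (use finU r rr in \<open>auto simp: U_def\<close>)
    thus "(case r of (a, x) \<Rightarrow> (\<Sum>p\<in>U. a p * g p) *\<^sub>R x) =
          (case r of (a, x) \<Rightarrow> (\<Sum>p\<in>{p. a p \<noteq> 0}. a p * g p) *\<^sub>R x)" by (simp add: rr)
  qed simp
  finally show ?thesis .
qed

lemma norm_sum_list_le:
  "norm (\<Sum>(a, x)\<leftarrow>rs. c a *\<^sub>R x) \<le> (\<Sum>(a, x)\<leftarrow>rs. \<bar>c a\<bar> * norm (x::'x::real_normed_vector))"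
proof (induction rs)
  case (Cons r rs)
  obtain a x where rr: "r = (a, x)" by force
  have "norm (c a *\<^sub>R x + (\<Sum>(a, x)\<leftarrow>rs. c a *\<^sub>R x)) \<le> norm (c a *\<^sub>R x) + norm (\<Sum>(a, x)\<leftarrow>rs. c a *\<^sub>R x)"
    by (rule norm_triangle_ineq)
  thus ?case using Cons by (simp add: rr)
qed simp

lemma scaleR_sum_list2:
  "c *\<^sub>R (\<Sum>(a, x)\<leftarrow>rs. a p *\<^sub>R (x::'x::real_vector)) = (\<Sum>(a, x)\<leftarrow>rs. (c * a p) *\<^sub>R x)"
  by (induction rs) (auto simp: scaleR_right_distrib)

lemma list_ineq:
  fixes F G H :: "'a \<Rightarrow> real"
  assumes "\<And>r. r \<in> set rs \<Longrightarrow> F r + G r \<le> c * H r"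
  shows "sum_list (map F rs) + sum_list (map G rs) \<le> c * sum_list (map H rs)"
  using assms
proof (induction rs)
  case (Cons a rs)
  have "F a + G a \<le> c * H a" using Cons.prems by simp
  moreover have "sum_list (map F rs) + sum_list (map G rs) \<le> c * sum_list (map H rs)"
    using Cons by simp
  ultimately show ?case by (simp add: distrib_left)
qed simp

definition TT :: "real \<Rightarrow> real \<Rightarrow> real \<Rightarrow> real" where
  "TT d r s = max 0 (1 - d * ln (max s r / r))"

lemma TT_bounds: "0 \<le> TT d r s" "d > 0 \<Longrightarrow> r > 0 \<Longrightarrow> TT d r s \<le> 1"
  unfolding TT_def by auto

lemma TT_one: "r > 0 \<Longrightarrow> s \<le> r \<Longrightarrow> TT d r s = 1"
  unfolding TT_def by simp

lemma TT_zero: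
  assumes "d > 0" "r > 0" "s \<ge> r * exp (1 / d)"
  shows "TT d r s = 0"
proof -
  have "r * exp (1/d) > r" using assms by simp
  hence "s > r" using assms by linarith
  hence sr: "max s r = s" "s > 0" using assms by (simp_all add: max_def)
  have "ln (s / r) \<ge> 1 / d"
    using assms sr by (subst ln_ge_iff) (auto simp: pos_le_divide_eq mult.commute)
  hence "d * ln (s / r) \<ge> 1" using assms by (simp add: divide_simps mult.commute)
  thus ?thesis unfolding TT_def sr by simp
qed

lemma TT_key:
  assumes d: "d > 0" and r: "r > 0" and ab: "0 \<le> a" "a \<le> b"
  shows "TT d r b \<le> TT d r a" "a * (TT d r a - TT d r b) \<le> d * (b - a)"
proof -
  define A where "A = max a r"
  define B where "B = max b r"
  have AB: "0 < A" "A \<le> B" "a \<le> A" "B - A \<le> b - a" using ab r by (auto simp: A_def B_def)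
  have lnAB: "ln (A / r) \<le> ln (B / r)" using AB r by (simp add: divide_right_mono)
  have dl: "d * ln (A / r) \<le> d * ln (B / r)" using d lnAB by (simp add: mult_left_mono)
  have "TT d r a - TT d r b \<le> d * (ln (B / r) - ln (A / r))"
    unfolding TT_def A_def[symmetric] B_def[symmetric] using dl
    by (auto simp: max_def algebra_simps)
  also have "ln (B / r) - ln (A / r) = ln (B / A)"
    using AB r by (simp add: ln_div)
  also have "ln (B / A) \<le> B / A - 1" using AB by (intro ln_le_minus_one) simp
  finally have 1: "TT d r a - TT d r b \<le> d * (B / A - 1)" using d by (simp add: mult_left_mono order_trans)
  show "TT d r b \<le> TT d r a"
  proof -
    have "d * ln (A / r) \<le> d * ln (B / r)" using d lnAB by (simp add: mult_left_mono)
    thus ?thesis unfolding TT_def A_def[symmetric] B_def[symmetric] by auto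
  qed
  have "a * (TT d r a - TT d r b) \<le> a * (d * (B / A - 1))" using 1 ab by (simp add: mult_left_mono)
  also have "\<dots> = d * (a * ((B - A) / A))" using AB by (simp add: field_simps)
  also have "a * ((B - A) / A) \<le> A * ((B - A) / A)"
    using AB by (intro mult_right_mono) auto
  also have "A * ((B - A) / A) = B - A" using AB by simp
  finally show "a * (TT d r a - TT d r b) \<le> d * (b - a)"
    using AB d by (simp add: mult_left_mono order_trans)
qed


lemma lip_half:
  fixes z :: "'m::metric_space"
  assumes d: "d > 0" and r: "r > 0" and f: "lip1_0 z f" and ord: "dist p' z \<le> dist p z"
    and sg: "\<sigma> = 1 \<or> \<sigma> = -1"
  shows "\<bar>(TT d r (dist p z) * f p + \<sigma> * ((1 - TT d r (dist p z)) * dist p z))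
        - (TT d r (dist p' z) * f p' + \<sigma> * ((1 - TT d r (dist p' z)) * dist p' z))\<bar>
        \<le> (1 + 2 * d) * dist p p'"
proof -
  define tp where "tp = TT d r (dist p z)"
  define tq where "tq = TT d r (dist p' z)"
  define rp where "rp = dist p z"
  define rq where "rq = dist p' z"
  define D where "D = dist p p'"
  have tb: "0 \<le> tp" "tp \<le> 1" using TT_bounds d r by (auto simp: tp_def)
  have key: "tp \<le> tq" "rq * (tq - tp) \<le> d * (rp - rq)"
    using TT_key[OF d r _ ord] by (auto simp: tp_def tq_def rp_def rq_def)
  have rD: "rp - rq \<le> D" "rq - rp \<le> D" using dist_triangle[of p z p'] dist_triangle[of p' z p]
    by (auto simp: rp_def rq_def D_def dist_commute)
  have rq0: "0 \<le> rq" by (simp add: rq_def)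
  have fD: "\<bar>f p - f p'\<bar> \<le> D" using f by (simp add: lip1_0_def D_def)
  have fq: "\<bar>f p'\<bar> \<le> rq" using lip_bound[OF f] by (simp add: rq_def)
  have A1: "\<bar>tp * (f p - f p')\<bar> \<le> tp * D"
    using tb fD by (simp add: abs_mult mult_left_mono)
  have A2: "\<bar>f p' * (tp - tq)\<bar> \<le> rq * (tq - tp)"
    using key fq by (simp add: abs_mult mult_right_mono)
  have A3: "\<bar>(1 - tp) * (rp - rq)\<bar> \<le> D - tp * D"
  proof -
    have "\<bar>(1 - tp) * (rp - rq)\<bar> = (1 - tp) * \<bar>rp - rq\<bar>" using tb by (simp add: abs_mult)
    also have "\<dots> \<le> (1 - tp) * D" using tb rD by (intro mult_left_mono) auto
    finally show ?thesis by (simp add: algebra_simps)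
  qed
  have A4: "\<bar>rq * (tq - tp)\<bar> = rq * (tq - tp)" using rq0 key by simp
  have id1: "tp * f p - tq * f p' = tp * (f p - f p') + f p' * (tp - tq)" by (simp add: algebra_simps)
  have id2: "(1 - tp) * rp - (1 - tq) * rq = (1 - tp) * (rp - rq) + rq * (tq - tp)" by (simp add: algebra_simps)
  have "\<bar>(tp * f p + \<sigma> * ((1 - tp) * rp)) - (tq * f p' + \<sigma> * ((1 - tq) * rq))\<bar>
      \<le> \<bar>tp * f p - tq * f p'\<bar> + \<bar>(1 - tp) * rp - (1 - tq) * rq\<bar>"
    using sg by (auto simp: algebra_simps abs_minus_commute)
  also have "\<dots> \<le> D + 2 * (rq * (tq - tp))"
    unfolding id1 id2 using A1 A2 A3 A4 by linarith
  also have "\<dots> \<le> D + 2 * (d * D)" using key rD by (smt (verit) d mult_left_mono)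
  finally show ?thesis by (simp add: tp_def tq_def rp_def rq_def D_def algebra_simps)
qed


lemma lip_full:
  fixes z :: "'m::metric_space"
  assumes d: "d > 0" and r: "r > 0" and f: "lip1_0 z f"
    and sg: "\<sigma> = 1 \<or> \<sigma> = -1"
  shows "\<bar>(TT d r (dist p z) * f p + \<sigma> * ((1 - TT d r (dist p z)) * dist p z))
        - (TT d r (dist p' z) * f p' + \<sigma> * ((1 - TT d r (dist p' z)) * dist p' z))\<bar>
        \<le> (1 + 2 * d) * dist p p'"
proof (cases "dist p' z \<le> dist p z")
  case True thus ?thesis using lip_half[OF d r f True sg] by simp
next
  case False
  hence "dist p z \<le> dist p' z" by simp
  from lip_half[OF d r f this sg] show ?thesis by (simp add: abs_minus_commute dist_commute)
qed

lemma elem: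
  fixes z :: "'m::metric_space"
  assumes d: "d > 0" and r: "r > 0" and fa: "fin_supp a"
  shows "free_norm z (\<lambda>p. TT d r (dist p z) * a p)
     + \<bar>\<Sum>p\<in>{p. a p \<noteq> 0}. a p * ((1 - TT d r (dist p z)) * dist p z)\<bar> \<le> (1 + 2 * d) * free_norm z a"
proof -
  define t where "t p = TT d r (dist p z)" for p
  define h where "h p = (1 - t p) * dist p z" for p
  define S2 where "S2 = (\<Sum>p\<in>{p. a p \<noteq> 0}. a p * h p)"
  have fin: "finite {p. a p \<noteq> 0}" using fa by (simp add: fin_supp_def)
  have "free_norm z (\<lambda>p. t p * a p) \<le> (1 + 2 * d) * free_norm z a - \<bar>S2\<bar>"
    unfolding free_norm_def[of z "\<lambda>p. t p * a p"]
  proof (rule cSUP_least)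
    show "Collect (lip1_0 z) \<noteq> {}" using lip1_0_zero by blast
  next
    fix f assume "f \<in> Collect (lip1_0 z)"
    hence f: "lip1_0 z f" by simp
    define S1 where "S1 = (\<Sum>p\<in>{p. a p \<noteq> 0}. a p * (t p * f p))"
    have e1: "(\<Sum>p\<in>{p. t p * a p \<noteq> 0}. t p * a p * f p) = S1"
    proof -
      have "(\<Sum>p\<in>{p. t p * a p \<noteq> 0}. t p * a p * f p) = (\<Sum>p\<in>{p. t p * a p \<noteq> 0}. a p * (t p * f p))"
        by (simp add: algebra_simps)
      also have "\<dots> = S1" unfolding S1_def
        by (rule sum.mono_neutral_left) (use fin in auto)
      finally show ?thesis .
    qed
    have bd: "\<bar>S1 + \<sigma> * S2\<bar> \<le> (1 + 2 * d) * free_norm z a" if sg: "\<sigma> = 1 \<or> \<sigma> = -1" for \<sigma>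
    proof -
      have "\<bar>\<Sum>p\<in>{p. a p \<noteq> 0}. a p * (t p * f p + \<sigma> * h p)\<bar> \<le> (1 + 2 * d) * free_norm z a"
      proof (rule free_ge[OF fa])
        show "0 < 1 + 2 * d" using d by simp
        show "t z * f z + \<sigma> * h z = 0" using f by (simp add: lip1_0_def h_def)
        fix p p'
        show "\<bar>t p * f p + \<sigma> * h p - (t p' * f p' + \<sigma> * h p')\<bar> \<le> (1 + 2 * d) * dist p p'"
          using lip_full[OF d r f sg, of p p'] by (simp add: t_def h_def)
      qed
      moreover have "(\<Sum>p\<in>{p. a p \<noteq> 0}. a p * (t p * f p + \<sigma> * h p)) = S1 + \<sigma> * S2"
        by (simp add: S1_def S2_def sum.distrib sum_distrib_left algebra_simps)
      ultimately show ?thesis by simp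
    qed
    have "\<bar>S1\<bar> \<le> (1 + 2 * d) * free_norm z a - \<bar>S2\<bar>"
      using bd[of 1] bd[of "-1"] by linarith
    thus "\<bar>\<Sum>p\<in>{p. t p * a p \<noteq> 0}. t p * a p * f p\<bar> \<le> (1 + 2 * d) * free_norm z a - \<bar>S2\<bar>"
      using e1 by simp
  qed
  thus ?thesis by (simp add: S2_def h_def t_def)
qed


lemma rep_bound:
  fixes z :: "'m::metric_space" and w :: "'m \<Rightarrow> 'x::real_normed_vector"
  assumes d: "d > 0" and r: "r > 0" and rep: "represents z w rs" and fw: "fin_supp w"
  shows "proj_norm z (\<lambda>p. TT d r (dist p z) *\<^sub>R w p)
      + norm (\<Sum>p\<in>{p. w p \<noteq> 0}. ((1 - TT d r (dist p z)) * dist p z) *\<^sub>R w p)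
      \<le> (1 + 2 * d) * (\<Sum>(a, x)\<leftarrow>rs. free_norm z a * norm x)"
proof -
  define t where "t p = TT d r (dist p z)" for p
  define h where "h p = (1 - t p) * dist p z" for p
  have fa: "\<And>a x. (a, x) \<in> set rs \<Longrightarrow> fin_supp a" using rep by (auto simp: represents_def)
  define rs' where "rs' = map (\<lambda>(a, x). ((\<lambda>p. t p * a p), x)) rs"
  have rep': "represents z (\<lambda>p. t p *\<^sub>R w p) rs'"
    unfolding represents_def
  proof safe
    fix a x assume "(a, x) \<in> set rs'"
    then obtain b where "(b, x) \<in> set rs" "a = (\<lambda>p. t p * b p)" by (auto simp: rs'_def)
    thus "fin_supp a" using fa[of b x] unfolding fin_supp_def
      by (auto elim: rev_finite_subset)
  next
    fix p assume "p \<noteq> z"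
    hence "t p *\<^sub>R w p = t p *\<^sub>R (\<Sum>(a, x)\<leftarrow>rs. a p *\<^sub>R x)" using rep by (simp add: represents_def)
    also have "\<dots> = (\<Sum>(a, x)\<leftarrow>rs. (t p * a p) *\<^sub>R x)" by (rule scaleR_sum_list2)
    also have "\<dots> = (\<Sum>(a, x)\<leftarrow>rs'. a p *\<^sub>R x)"
      unfolding rs'_def by (induction rs) auto
    finally show "t p *\<^sub>R w p = (\<Sum>(a, x)\<leftarrow>rs'. a p *\<^sub>R x)" .
  qed
  have P1: "proj_norm z (\<lambda>p. t p *\<^sub>R w p) \<le> (\<Sum>(a, x)\<leftarrow>rs. free_norm z (\<lambda>p. t p * a p) * norm x)"
  proof -
    have "(\<Sum>(a, x)\<leftarrow>rs'. free_norm z a * norm x) = (\<Sum>(a, x)\<leftarrow>rs. free_norm z (\<lambda>p. t p * a p) * norm x)"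
      unfolding rs'_def by (induction rs) auto
    thus ?thesis using proj_upper[OF rep'] by simp
  qed
  have hz: "h z = 0" by (simp add: h_def)
  have P2: "norm (\<Sum>p\<in>{p. w p \<noteq> 0}. h p *\<^sub>R w p)
      \<le> (\<Sum>(a, x)\<leftarrow>rs. \<bar>\<Sum>p\<in>{p. a p \<noteq> 0}. a p * h p\<bar> * norm x)"
    unfolding pairing[OF rep fw, of h, OF hz] by (rule norm_sum_list_le)
  have P3: "(\<Sum>(a, x)\<leftarrow>rs. free_norm z (\<lambda>p. t p * a p) * norm x)
      + (\<Sum>(a, x)\<leftarrow>rs. \<bar>\<Sum>p\<in>{p. a p \<noteq> 0}. a p * h p\<bar> * norm x)
      \<le> (1 + 2 * d) * (\<Sum>(a, x)\<leftarrow>rs. free_norm z a * norm x)"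
  proof (rule list_ineq)
    fix q assume q: "q \<in> set rs"
    obtain a x where qq: "q = (a, x)" by force
    have "free_norm z (\<lambda>p. t p * a p) + \<bar>\<Sum>p\<in>{p. a p \<noteq> 0}. a p * h p\<bar> \<le> (1 + 2 * d) * free_norm z a"
      using elem[OF d r fa[of a x]] q qq by (simp add: t_def h_def)
    hence "(free_norm z (\<lambda>p. t p * a p) + \<bar>\<Sum>p\<in>{p. a p \<noteq> 0}. a p * h p\<bar>) * norm x
        \<le> ((1 + 2 * d) * free_norm z a) * norm x" by (rule mult_right_mono) simp
    thus "(case q of (a, x) \<Rightarrow> free_norm z (\<lambda>p. t p * a p) * norm x)
        + (case q of (a, x) \<Rightarrow> \<bar>\<Sum>p\<in>{p. a p \<noteq> 0}. a p * h p\<bar> * norm x)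
        \<le> (1 + 2 * d) * (case q of (a, x) \<Rightarrow> free_norm z a * norm x)"
      by (simp add: qq algebra_simps)
  qed
  from P1 P2 P3 show ?thesis by (simp add: t_def h_def)
qed


lemma dist_lip: "\<bar>dist p z - dist p' z\<bar> \<le> dist p p'"
  using dist_triangle[of p z p'] dist_triangle[of p' z p] by (auto simp: dist_commute)

lemma y_norm:
  fixes z :: "'m::metric_space" and x0 :: "'x::real_normed_vector"
  assumes qz: "q \<noteq> z" and x0: "norm x0 = 1"
  shows "proj_norm z (\<lambda>p. if p = q then (1 / dist q z) *\<^sub>R x0 else 0) = 1"
proof -
  define D where "D = dist q z"
  have D: "D > 0" using qz by (simp add: D_def)
  define y where "y = (\<lambda>p. if p = q then (1 / D) *\<^sub>R x0 else 0)"
  have fy: "fin_supp y" unfolding fin_supp_def y_def by (auto elim: rev_finite_subset[of "{q}"])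
  define rs0 where "rs0 = [((\<lambda>p. if p = q then 1 else 0::real), (1 / D) *\<^sub>R x0)]"
  have rep0: "represents z y rs0"
    unfolding represents_def rs0_def y_def fin_supp_def by auto
  have "proj_norm z y \<le> 1"
  proof -
    have "proj_norm z y \<le> free_norm z (\<lambda>p. if p = q then 1 else 0::real) * norm ((1 / D) *\<^sub>R x0)"
      using proj_upper[OF rep0] by (simp add: rs0_def)
    also have "\<dots> \<le> D * (1 / D)"
      using free_delta[of z q] D x0 by (simp add: D_def)
    finally show ?thesis using D by simp
  qed
  moreover have "1 \<le> proj_norm z y"
  proof (rule proj_lower)
    show "\<exists>rs. represents z y rs" using rep0 by blast
  next
    fix rs assume rep: "represents z y rs"
    have fa: "\<And>a x. (a, x) \<in> set rs \<Longrightarrow> fin_supp a" using rep by (auto simp: represents_def)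
    have "{p. y p \<noteq> 0} = {q}" using x0 D by (auto simp: y_def)
    hence "(\<Sum>p\<in>{p. y p \<noteq> 0}. dist p z *\<^sub>R y p) = x0" using D by (simp add: y_def D_def)
    hence "1 = norm (\<Sum>(a, x)\<leftarrow>rs. (\<Sum>p\<in>{p. a p \<noteq> 0}. a p * dist p z) *\<^sub>R x)"
      using pairing[OF rep fy, of "\<lambda>p. dist p z"] x0 by simp
    also have "\<dots> \<le> (\<Sum>(a, x)\<leftarrow>rs. \<bar>\<Sum>p\<in>{p. a p \<noteq> 0}. a p * dist p z\<bar> * norm x)"
      by (rule norm_sum_list_le)
    also have "\<dots> \<le> (\<Sum>(a, x)\<leftarrow>rs. free_norm z a * norm x)"
    proof (rule sum_list_mono)
      fix r assume r: "r \<in> set rs"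
      obtain a x where rr: "r = (a, x)" by force
      have "\<bar>\<Sum>p\<in>{p. a p \<noteq> 0}. a p * dist p z\<bar> \<le> 1 * free_norm z a"
        by (rule free_ge[OF fa[of a x]]) (use r rr dist_lip in auto)
      hence "\<bar>\<Sum>p\<in>{p. a p \<noteq> 0}. a p * dist p z\<bar> * norm x \<le> free_norm z a * norm x"
        by (simp add: mult_right_mono)
      thus "(case r of (a, x) \<Rightarrow> \<bar>\<Sum>p\<in>{p. a p \<noteq> 0}. a p * dist p z\<bar> * norm x)
          \<le> (case r of (a, x) \<Rightarrow> free_norm z a * norm x)" by (simp add: rr)
    qed
    finally show "1 \<le> (\<Sum>(a, x)\<leftarrow>rs. free_norm z a * norm x)" .
  qed
  ultimately have "proj_norm z y = 1" by simp
  thus ?thesis unfolding y_def D_def .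
qed


theorem theorem4p3:
  fixes z :: "'m::metric_space"
  assumes "uniformly_discrete (UNIV :: 'm set)"
    and "\<not> bounded (UNIV :: 'm set)"
    and "\<exists>x::'x::banach. x \<noteq> 0"
  shows "octahedral (tensor_space z :: ('m \<Rightarrow> 'x) set) (proj_norm z)"
  unfolding octahedral_def
proof (intro allI impI)
  fix F :: "('m \<Rightarrow> 'x) set" and e :: real
  assume H: "finite F \<and> F \<subseteq> {x \<in> tensor_space z. proj_norm z x = 1} \<and> e > 0"
  hence finF: "finite F" and FV: "\<And>u. u \<in> F \<Longrightarrow> u \<in> tensor_space z \<and> proj_norm z u = 1"
    and e: "e > 0" by auto
  obtain x1 :: 'x where x1: "x1 \<noteq> 0" using assms(3) by blast
  define x0 where "x0 = (1 / norm x1) *\<^sub>R x1"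
  have x0: "norm x0 = 1" using x1 by (simp add: x0_def)
  define d where "d = e / 4"
  have d: "d > 0" using e by (simp add: d_def)
  define Sall where "Sall = (\<Union>u\<in>F. {p. u p \<noteq> 0})"
  have finS: "finite Sall" unfolding Sall_def using finF FV
    by (auto simp: tensor_space_def fin_supp_def)
  define r where "r = 1 + (\<Sum>p\<in>Sall. dist p z)"
  have "0 \<le> (\<Sum>p\<in>Sall. dist p z)" by (rule sum_nonneg) simp
  hence r: "r > 0" unfolding r_def by linarith
  have rS: "\<And>p. p \<in> Sall \<Longrightarrow> dist p z \<le> r"
  proof -
    fix p assume "p \<in> Sall"
    hence "dist p z \<le> (\<Sum>p\<in>Sall. dist p z)"
      using finS by (intro member_le_sum) auto
    thus "dist p z \<le> r" by (simp add: r_def)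
  qed
  have "\<not> (\<forall>y. dist z y \<le> r * exp (1 / d))" using assms(2) unfolding bounded_def by blast
  then obtain q where "\<not> dist z q \<le> r * exp (1 / d)" by blast
  hence q: "dist q z > r * exp (1 / d)" by (simp add: dist_commute)
  have rr: "r \<le> r * exp (1 / d)" using r d by simp
  have qr: "dist q z > r" using q rr by linarith
  have qz: "q \<noteq> z" using qr r by auto
  have qS: "q \<notin> Sall" using qr rS by (meson not_le)
  define D where "D = dist q z"
  have D: "D > 0" using qz by (simp add: D_def)
  define y where "y = (\<lambda>p. if p = q then (1 / D) *\<^sub>R x0 else (0::'x))"
  have yn: "proj_norm z y = 1" unfolding y_def D_def by (rule y_norm[OF qz x0])
  have fy: "fin_supp y" unfolding fin_supp_def y_def by (auto elim: rev_finite_subset[of "{q}"])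
  have yV: "y \<in> tensor_space z" using fy qz by (simp add: tensor_space_def y_def)
  define t where "t p = TT d r (dist p z)" for p
  define h where "h p = (1 - t p) * dist p z" for p
  have tq: "t q = 0" unfolding t_def using TT_zero[OF d r] q by simp
  have tS: "\<And>p. p \<in> Sall \<Longrightarrow> t p = 1" unfolding t_def using TT_one[OF r] rS by blast
  show "\<exists>y\<in>tensor_space z. proj_norm z y = 1 \<and> (\<forall>x\<in>F. 2 - e \<le> proj_norm z (x - y))"
  proof (intro bexI conjI ballI)
    show "y \<in> tensor_space z" by (rule yV)
    show "proj_norm z y = 1" by (rule yn)
    fix u assume uF: "u \<in> F"
    have uV: "fin_supp u" "u z = 0" "proj_norm z u = 1" using FV[OF uF] by (auto simp: tensor_space_def)
    have uS: "\<And>p. u p \<noteq> 0 \<Longrightarrow> p \<in> Sall" using uF by (auto simp: Sall_def)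
    have uq: "u q = 0" using uS qS by blast
    define w where "w = u - y"
    have wp: "\<And>p. w p = u p - y p" by (simp add: w_def)
    have fw: "fin_supp w"
    proof -
      have "{p. w p \<noteq> 0} \<subseteq> {p. u p \<noteq> 0} \<union> {p. y p \<noteq> 0}" by (auto simp: wp)
      moreover have "finite ({p. u p \<noteq> 0} \<union> {p. y p \<noteq> 0})"
        using uV(1) fy by (simp add: fin_supp_def)
      ultimately show ?thesis unfolding fin_supp_def by (rule finite_subset)
    qed
    have tw: "(\<lambda>p. t p *\<^sub>R w p) = u"
    proof
      fix p show "t p *\<^sub>R w p = u p"
      proof (cases "u p = 0")
        case True
        thus ?thesis using tq by (cases "p = q") (auto simp: wp y_def)
      next
        case False
        hence "p \<in> Sall" "p \<noteq> q" using uS qS by auto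
        thus ?thesis using tS by (simp add: wp y_def)
      qed
    qed
    have hw: "(\<Sum>p\<in>{p. w p \<noteq> 0}. h p *\<^sub>R w p) = - x0"
    proof -
      have wq: "w q = - ((1 / D) *\<^sub>R x0)" by (simp add: wp uq y_def)
      have qin: "q \<in> {p. w p \<noteq> 0}" using wq x0 D by auto
      have "(\<Sum>p\<in>{p. w p \<noteq> 0}. h p *\<^sub>R w p) = (\<Sum>p\<in>{p. w p \<noteq> 0}. if p = q then h q *\<^sub>R w q else 0)"
      proof (rule sum.cong)
        fix p assume p: "p \<in> {p. w p \<noteq> 0}"
        show "h p *\<^sub>R w p = (if p = q then h q *\<^sub>R w q else 0)"
        proof (cases "p = q")
          case False
          hence "u p \<noteq> 0" using p by (simp add: wp y_def)
          hence "t p = 1" using uS tS by blast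
          thus ?thesis using False by (simp add: h_def)
        qed simp
      qed simp
      also have "\<dots> = h q *\<^sub>R w q" using fw qin by (simp add: fin_supp_def)
      also have "\<dots> = - x0" using wq tq D by (simp add: h_def D_def)
      finally show ?thesis .
    qed
    show "2 - e \<le> proj_norm z (u - y)"
      unfolding w_def[symmetric]
    proof (rule proj_lower)
      show "\<exists>rs. represents z w rs" by (rule rep_exists[OF fw])
    next
      fix rs assume rep: "represents z w rs"
      define c where "c = (\<Sum>(a, x)\<leftarrow>rs. free_norm z a * norm x)"
      have "proj_norm z (\<lambda>p. t p *\<^sub>R w p) + norm (\<Sum>p\<in>{p. w p \<noteq> 0}. h p *\<^sub>R w p) \<le> (1 + 2 * d) * c"
        using rep_bound[OF d r rep fw] by (simp add: t_def h_def c_def)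
      hence c2: "2 \<le> (1 + 2 * d) * c" using tw hw uV(3) x0 by simp
      have "(2 - e) * (1 + 2 * d) \<le> 2" using e by (simp add: d_def algebra_simps power2_eq_square)
      hence "(1 + 2 * d) * (2 - e) \<le> (1 + 2 * d) * c" using c2 by (simp add: mult.commute)
      hence "2 - e \<le> c" using d by (smt (verit) mult_le_cancel_left_pos)
      thus "2 - e \<le> (\<Sum>(a, x)\<leftarrow>rs. free_norm z a * norm x)" by (simp add: c_def)
    qed
  qed
qed

end
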